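(* Let $D\mathcal{M}$ be an $\ell c$DCB system. Then every positive equilibrium $x^*\in\mathbb{R}^n_{>0}$ of $D\mathcal{M}$ (viewed as a constant function on $[-\tau,0]$) is Lyapunov stable for the delay differential equation of $D\mathcal{M}$ on $C([-\tau,0];\mathbb{R}^n_{>0})$ with the supremum norm.
   Context: For $x,y\in\mathbb{R}^n$ with $x\ge 0$, write $x^{y}=\prod_{j=1}^n x_j^{y_j}$. A delayed mass-action system on species $X_1,\dots,X_n$ consists of reactions $R_i: y_{\cdot i}\to y'_{\cdot i}$, $i=1,\dots,r$, with complexes $y_{\cdot i},y'_{\cdot i}\in\mathbb{R}^n_{\ge0}$, rate constants $\kappa_i>0$ and delays $\tau_i\ge0$; with $\tau\ge\max_i\tau_i$, its dynamics is the delay differential equation $\dot x(t)=F(x_t):=\sum_{i=1}^r\kappa_i\big[x(t-\tau_i)^{y_{\cdot i}}y'_{\cdot i}-x(t)^{y_{\cdot i}}y_{\cdot i}\big]$, $t\ge 0$, where $x_t(s)=x(t+s)$, $s\in[-\tau,0]$, with initial function $\theta\in C([-\tau,0];\mathbb{R}^n_{\ge0})$. A positive equilibrium is $x^*\in\mathbb{R}^n_{>0}$ with $\sum_i\kappa_i (x^* )^{y_{\cdot i}}(y'_{\cdot i}-y_{\cdot i})=0$. A vector $\bar x\in\mathbb{R}^n_{>0}$ is a complex balanced equilibrium if for every complex $\eta$ of the network $\sum_{i: y_{\cdot i}=\eta}\kappa_i\bar x^{y_{\cdot i}}=\sum_{i: y'_{\cdot i}=\eta}\kappa_i\bar x^{y_{\cdot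 i}}$. A delayed complex balanced (DCB) system is a delayed mass-action system admitting a positive complex balanced equilibrium. Two delayed mass-action systems $D\mathcal{M}$ (right-hand side $F$) and $D\tilde{\mathcal{M}}$ (right-hand side $\tilde F$) on the same species are linearly conjugate via a positive diagonal matrix $Q$ if $F(Q\psi)=Q\tilde F(\psi)$ for all $\psi\in C([-\tau,0];\mathbb{R}^n_{>0})$, i.e. $x(t)=Q\tilde x(t)$ maps solutions of $D\tilde{\mathcal{M}}$ to solutions of $D\mathcal{M}$. An $\ell c$DCB system is a delayed mass-action system that is linearly conjugate via some positive diagonal matrix to a DCB system. *)

theory Defs
  imports "HOL-Analysis.Analysis"
begin

text \<open>A delayed mass-action system has r reactions indexed by i < r, with reactant
  complexes Y i, product complexes Y' i, rate constants k i and delays d i.\<close>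

definition mon :: "real^'n \<Rightarrow> real^'n \<Rightarrow> real" where
  "mon x y = (\<Prod>j\<in>UNIV. if y $ j = 0 then 1 else (x $ j) powr (y $ j))"

definition nonneg_vec :: "real^'n \<Rightarrow> bool" where
  "nonneg_vec v \<longleftrightarrow> (\<forall>j. 0 \<le> v $ j)"

definition pos_vec :: "real^'n \<Rightarrow> bool" where
  "pos_vec v \<longleftrightarrow> (\<forall>j. 0 < v $ j)"

definition dmas ::
  "real \<Rightarrow> nat \<Rightarrow> (nat \<Rightarrow> real^'n) \<Rightarrow> (nat \<Rightarrow> real^'n) \<Rightarrow> (nat \<Rightarrow> real) \<Rightarrow> (nat \<Rightarrow> real) \<Rightarrow> bool"
  where
  "dmas tau r Y Y' k d \<longleftrightarrow>
     (\<forall>i<r. nonneg_vec (Y i) \<and> nonneg_vec (Y' i) \<and> 0 < k i \<and> 0 \<le> d i \<and> d i \<le> tau)"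

definition dmas_rhs ::
  "nat \<Rightarrow> (nat \<Rightarrow> real^'n) \<Rightarrow> (nat \<Rightarrow> real^'n) \<Rightarrow> (nat \<Rightarrow> real) \<Rightarrow> (nat \<Rightarrow> real)
   \<Rightarrow> (real \<Rightarrow> real^'n) \<Rightarrow> real^'n" where
  "dmas_rhs r Y Y' k d psi =
     (\<Sum>i<r. k i *\<^sub>R (mon (psi (- d i)) (Y i) *\<^sub>R Y' i - mon (psi 0) (Y i) *\<^sub>R Y i))"

definition pos_equilibrium ::
  "nat \<Rightarrow> (nat \<Rightarrow> real^'n) \<Rightarrow> (nat \<Rightarrow> real^'n) \<Rightarrow> (nat \<Rightarrow> real) \<Rightarrow> real^'n \<Rightarrow> bool" where
  "pos_equilibrium r Y Y' k xs \<longleftrightarrow>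
     pos_vec xs \<and> (\<Sum>i<r. (k i * mon xs (Y i)) *\<^sub>R (Y' i - Y i)) = 0"

definition complex_balanced ::
  "nat \<Rightarrow> (nat \<Rightarrow> real^'n) \<Rightarrow> (nat \<Rightarrow> real^'n) \<Rightarrow> (nat \<Rightarrow> real) \<Rightarrow> real^'n \<Rightarrow> bool" where
  "complex_balanced r Y Y' k xb \<longleftrightarrow> pos_vec xb \<and>
     (\<forall>eta \<in> Y ` {..<r} \<union> Y' ` {..<r}.
        (\<Sum>i\<in>{i. i < r \<and> Y i = eta}. k i * mon xb (Y i)) =
        (\<Sum>i\<in>{i. i < r \<and> Y' i = eta}. k i * mon xb (Y i)))"

definition DCB ::
  "real \<Rightarrow> nat \<Rightarrow> (nat \<Rightarrow> real^'n) \<Rightarrow> (nat \<Rightarrow> real^'n) \<Rightarrow> (nat \<Rightarrow> real) \<Rightarrow> (nat \<Rightarrow> real) \<Rightarrow> bool"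
  where
  "DCB tau r Y Y' k d \<longleftrightarrow> dmas tau r Y Y' k d \<and> (\<exists>xb. complex_balanced r Y Y' k xb)"

text \<open>Positive diagonal matrix Q = diag(q) acting on a vector / on a history.\<close>
definition diag_app :: "real^'n \<Rightarrow> real^'n \<Rightarrow> real^'n" where
  "diag_app q v = (\<chi> j. q $ j * v $ j)"

definition pos_hist :: "real \<Rightarrow> (real \<Rightarrow> real^'n) \<Rightarrow> bool" where
  "pos_hist tau psi \<longleftrightarrow> continuous_on {-tau..0} psi \<and> (\<forall>s\<in>{-tau..0}. pos_vec (psi s))"

definition lin_conj ::
  "real \<Rightarrow> real^'n
   \<Rightarrow> nat \<Rightarrow> (nat \<Rightarrow> real^'n) \<Rightarrow> (nat \<Rightarrow> real^'n) \<Rightarrow> (nat \<Rightarrow> real) \<Rightarrow> (nat \<Rightarrow> real)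
   \<Rightarrow> nat \<Rightarrow> (nat \<Rightarrow> real^'n) \<Rightarrow> (nat \<Rightarrow> real^'n) \<Rightarrow> (nat \<Rightarrow> real) \<Rightarrow> (nat \<Rightarrow> real) \<Rightarrow> bool"
  where
  "lin_conj tau q r Y Y' k d r2 Y2 Y2' k2 d2 \<longleftrightarrow> pos_vec q \<and>
     (\<forall>psi. pos_hist tau psi \<longrightarrow>
        dmas_rhs r Y Y' k d (\<lambda>s. diag_app q (psi s)) = diag_app q (dmas_rhs r2 Y2 Y2' k2 d2 psi))"

definition lcDCB ::
  "real \<Rightarrow> nat \<Rightarrow> (nat \<Rightarrow> real^'n) \<Rightarrow> (nat \<Rightarrow> real^'n) \<Rightarrow> (nat \<Rightarrow> real) \<Rightarrow> (nat \<Rightarrow> real) \<Rightarrow> bool"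
  where
  "lcDCB tau r Y Y' k d \<longleftrightarrow> dmas tau r Y Y' k d \<and>
     (\<exists>q r2 Y2 Y2' k2 d2. DCB tau r2 Y2 Y2' k2 d2 \<and> lin_conj tau q r Y Y' k d r2 Y2 Y2' k2 d2)"

definition dmas_solution ::
  "real \<Rightarrow> nat \<Rightarrow> (nat \<Rightarrow> real^'n) \<Rightarrow> (nat \<Rightarrow> real^'n) \<Rightarrow> (nat \<Rightarrow> real) \<Rightarrow> (nat \<Rightarrow> real)
   \<Rightarrow> (real \<Rightarrow> real^'n) \<Rightarrow> ereal \<Rightarrow> (real \<Rightarrow> real^'n) \<Rightarrow> bool" where
  "dmas_solution tau r Y Y' k d theta T x \<longleftrightarrow>
     0 < T \<and>
     continuous_on {t. -tau \<le> t \<and> ereal t < T} x \<and>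
     (\<forall>s\<in>{-tau..0}. x s = theta s) \<and>
     (\<forall>t. -tau \<le> t \<and> ereal t < T \<longrightarrow> nonneg_vec (x t)) \<and>
     (\<forall>t. 0 \<le> t \<and> ereal t < T \<longrightarrow>
        (x has_vector_derivative dmas_rhs r Y Y' k d (\<lambda>s. x (t + s)))
          (at t within {t'. 0 \<le> t' \<and> ereal t' < T}))"

definition lyapunov_stable ::
  "real \<Rightarrow> nat \<Rightarrow> (nat \<Rightarrow> real^'n) \<Rightarrow> (nat \<Rightarrow> real^'n) \<Rightarrow> (nat \<Rightarrow> real) \<Rightarrow> (nat \<Rightarrow> real)
   \<Rightarrow> real^'n \<Rightarrow> bool" where
  "lyapunov_stable tau r Y Y' k d xs \<longleftrightarrow>
     (\<forall>\<epsilon>>0. \<exists>\<delta>>0. \<forall>theta T x.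
        pos_hist tau theta \<and> (\<forall>s\<in>{-tau..0}. norm (theta s - xs) < \<delta>) \<and>
        dmas_solution tau r Y Y' k d theta T x \<longrightarrow>
        (\<forall>t. 0 \<le> t \<and> ereal t < T \<longrightarrow> (\<forall>s\<in>{-tau..0}. norm (x (t + s) - xs) < \<epsilon>)))"

end

theory Submission
  imports Defs
begin
definition lv :: "real^'n \<Rightarrow> real^'n" where "lv w = (\<chi> j. ln (w $ j))"
definition phi :: "real \<Rightarrow> real" where "phi p = exp p * (p - 1) + 1"

lemma mon_pos_eq: assumes "pos_vec w" shows "mon w y = exp (y \<bullet> lv w)"
proof -
  have "\<And>j. (if y $ j = 0 then 1 else w $ j powr y $ j) = exp (y $ j * ln (w $ j))"
  proof -
    fix j have "w $ j \<noteq> 0" using assms unfolding pos_vec_def by (metis less_irrefl)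
    thus "(if y $ j = 0 then 1 else w $ j powr y $ j) = exp (y $ j * ln (w $ j))"
      by (simp add: powr_def mult.commute)
  qed
  thus ?thesis unfolding mon_def lv_def inner_vec_def by (simp add: exp_sum)
qed

lemma mon_pos: "pos_vec w \<Longrightarrow> mon w y > 0"
  by (simp add: mon_pos_eq)

lemma exp_ge_shift: "exp a * (1 + (b - a)) \<le> exp (b::real)"
proof -
  have "1 + (b - a) \<le> exp (b - a)" by (rule exp_ge_add_one_self)
  hence "exp a * (1 + (b - a)) \<le> exp a * exp (b - a)" by simp
  also have "\<dots> = exp b" by (simp add: exp_diff)
  finally show ?thesis .
qed

lemma exp_eq_one_plus: "exp (x::real) = 1 + x \<Longrightarrow> x = 0"
proof (rule ccontr)
  assume e: "exp x = 1 + x" and nz: "x \<noteq> 0"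
  show False
  proof (cases "1 + x/2 \<ge> 0")
    case True
    have "(1 + x/2)^2 \<le> exp (x/2) ^2"
      using exp_ge_add_one_self[of "x/2"] True by (intro power_mono) auto
    also have "\<dots> = exp x" by (simp add: power2_eq_square flip: exp_add)
    finally have "1 + x + x^2/4 \<le> 1 + x" using e by (simp add: power2_eq_square algebra_simps)
    moreover have "x^2 > 0" using nz by simp
    ultimately show False by simp
  next
    case False
    hence "1 + x < 0" by simp
    with e show False using exp_gt_zero[of x] by linarith
  qed
qed

lemma phi_nonneg: "phi p \<ge> 0"
proof -
  have "exp p * (1 + (0 - p)) \<le> exp 0" by (rule exp_ge_shift)
  thus ?thesis unfolding phi_def by (simp add: algebra_simps)
qed

lemma phi_pos: "p \<noteq> 0 \<Longrightarrow> phi p > 0"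
proof -
  assume "p \<noteq> 0"
  have "exp p * (1 + (0 - p)) \<le> exp 0" by (rule exp_ge_shift)
  moreover have "exp p * (1 + (0 - p)) \<noteq> 1"
  proof
    assume "exp p * (1 + (0 - p)) = 1"
    hence "exp (-p) = 1 + (-p)" by (simp add: exp_minus field_simps)
    hence "-p = 0" by (rule exp_eq_one_plus)
    with \<open>p \<noteq> 0\<close> show False by simp
  qed
  ultimately show ?thesis unfolding phi_def by (simp add: algebra_simps)
qed

lemma phi_deriv: "(phi has_real_derivative (p * exp p)) (at p)"
  unfolding phi_def by (auto intro!: derivative_eq_intros simp: algebra_simps)

lemma phi_mono_pos: "0 \<le> a \<Longrightarrow> a \<le> b \<Longrightarrow> phi a \<le> phi b"
  by (rule DERIV_nonneg_imp_nondecreasing[of a b phi]) (auto intro!: phi_deriv)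

lemma phi_mono_neg: "b \<le> a \<Longrightarrow> a \<le> 0 \<Longrightarrow> phi a \<le> phi b"
  using DERIV_nonpos_imp_nonincreasing[of b a phi] phi_deriv
  by (metis mult_nonpos_nonneg exp_ge_zero order_trans)

lemma cb_sum:
  fixes A B :: "nat \<Rightarrow> real^'n"
  assumes cb: "complex_balanced R A B \<kappa> xb"
  shows "(\<Sum>i<R. \<kappa> i * mon xb (A i) * \<Phi> (B i)) = (\<Sum>i<R. \<kappa> i * mon xb (A i) * \<Phi> (A i))"
proof -
  define E where "E = A ` {..<R} \<union> B ` {..<R}"
  define w where "w i = \<kappa> i * mon xb (A i)" for i
  have fE: "finite E" unfolding E_def by auto
  have eq: "(\<Sum>i<R. w i * \<Phi> (G i)) = (\<Sum>\<eta>\<in>E. \<Phi> \<eta> * (\<Sum>i\<in>{i. i < R \<and> G i = \<eta>}. w i))"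
    if "G ` {..<R} \<subseteq> E" for G
  proof -
    have "(\<Sum>i<R. w i * \<Phi> (G i)) = (\<Sum>\<eta>\<in>E. \<Sum>i\<in>{x. x \<in> {..<R} \<and> G x = \<eta>}. w i * \<Phi> (G i))"
      by (rule sum.group[symmetric]) (use fE that in auto)
    also have "\<dots> = (\<Sum>\<eta>\<in>E. \<Phi> \<eta> * (\<Sum>i\<in>{i. i < R \<and> G i = \<eta>}. w i))"
      by (rule sum.cong) (auto simp: sum_distrib_left mult.commute intro!: sum.cong)
    finally show ?thesis .
  qed
  have "(\<Sum>i<R. w i * \<Phi> (B i)) = (\<Sum>\<eta>\<in>E. \<Phi> \<eta> * (\<Sum>i\<in>{i. i < R \<and> B i = \<eta>}. w i))"
    by (rule eq) (auto simp: E_def)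
  also have "\<dots> = (\<Sum>\<eta>\<in>E. \<Phi> \<eta> * (\<Sum>i\<in>{i. i < R \<and> A i = \<eta>}. w i))"
    using cb unfolding complex_balanced_def w_def E_def by (intro sum.cong) auto
  also have "\<dots> = (\<Sum>i<R. w i * \<Phi> (A i))"
    by (rule eq[symmetric]) (auto simp: E_def)
  finally show ?thesis unfolding w_def .
qed

lemma mon_shift: "pos_vec c \<Longrightarrow> pos_vec xb \<Longrightarrow> mon c y = mon xb y * exp (y \<bullet> (lv c - lv xb))"
  by (simp add: mon_pos_eq inner_diff_right flip: exp_add)

lemma equil_ab:
  fixes A B :: "nat \<Rightarrow> real^'n"
  assumes cb: "complex_balanced R A B \<kappa> xb" and pc: "pos_vec c"
    and kp: "\<forall>i<R. \<kappa> i > 0"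
    and eq: "(\<Sum>i<R. \<kappa> i *\<^sub>R (mon c (A i) *\<^sub>R B i - mon c (A i) *\<^sub>R A i)) = 0"
  shows "\<forall>i<R. A i \<bullet> (lv c - lv xb) = B i \<bullet> (lv c - lv xb)"
proof -
  have px: "pos_vec xb" using cb unfolding complex_balanced_def by auto
  define u where "u = lv c - lv xb"
  define a where "a i = A i \<bullet> u" for i
  define b where "b i = B i \<bullet> u" for i
  define M where "M i = mon xb (A i)" for i
  have Mp: "M i > 0" for i unfolding M_def using px by (rule mon_pos)
  have mc: "mon c (A i) = M i * exp (a i)" for i
    unfolding M_def a_def u_def by (rule mon_shift[OF pc px])
  have "0 = (\<Sum>i<R. \<kappa> i *\<^sub>R (mon c (A i) *\<^sub>R B i - mon c (A i) *\<^sub>R A i)) \<bullet> u"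
    using eq by simp
  also have "\<dots> = (\<Sum>i<R. \<kappa> i * (M i * exp (a i)) * (b i - a i))"
    by (simp add: inner_sum_left inner_diff_left mc a_def b_def algebra_simps)
  finally have E1: "(\<Sum>i<R. \<kappa> i * M i * (exp (a i) * (b i - a i))) = 0"
    by (simp add: algebra_simps)
  have E2: "(\<Sum>i<R. \<kappa> i * M i * exp (b i)) = (\<Sum>i<R. \<kappa> i * M i * exp (a i))"
    using cb_sum[OF cb, where \<Phi>="\<lambda>\<eta>. exp (\<eta> \<bullet> u)"] unfolding M_def a_def b_def by simp
  have S: "(\<Sum>i<R. \<kappa> i * M i * (exp (b i) - exp (a i) * (1 + (b i - a i)))) = 0"
    using E1 E2 by (simp add: algebra_simps sum_subtractf sum.distrib)
  have nn: "\<forall>i\<in>{..<R}. 0 \<le> \<kappa> i * M i * (exp (b i) - exp (a i) * (1 + (b i - a i)))"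
  proof
    fix i assume "i \<in> {..<R}"
    hence "0 \<le> \<kappa> i * M i" using kp Mp[of i] by (simp add: less_imp_le)
    moreover have "0 \<le> exp (b i) - exp (a i) * (1 + (b i - a i))" using exp_ge_shift[of "a i" "b i"] by simp
    ultimately show "0 \<le> \<kappa> i * M i * (exp (b i) - exp (a i) * (1 + (b i - a i)))" by simp
  qed
  show ?thesis
  proof (intro allI impI)
    fix i assume i: "i < R"
    have "\<kappa> i * M i * (exp (b i) - exp (a i) * (1 + (b i - a i))) = 0"
      using S nn i by (subst (asm) sum_nonneg_eq_0_iff) auto
    hence "exp (b i) = exp (a i) * (1 + (b i - a i))" using kp i Mp[of i] by (metis less_irrefl mult_eq_0_iff eq_iff_diff_eq_0)
    hence "exp (b i - a i) = 1 + (b i - a i)" by (simp add: exp_diff field_simps)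
    hence "b i - a i = 0" by (rule exp_eq_one_plus)
    thus "A i \<bullet> (lv c - lv xb) = B i \<bullet> (lv c - lv xb)" unfolding a_def b_def u_def by simp
  qed
qed

definition hf :: "real^'n \<Rightarrow> real^'n \<Rightarrow> real^'n \<Rightarrow> real" where
  "hf c y v = mon c y * phi (y \<bullet> (lv v - lv c))"

lemma cbc:
  fixes A B :: "nat \<Rightarrow> real^'n"
  assumes cb: "complex_balanced R A B \<kappa> xb" and pc: "pos_vec c"
    and ab: "\<forall>i<R. A i \<bullet> (lv c - lv xb) = B i \<bullet> (lv c - lv xb)"
  shows "(\<Sum>i<R. \<kappa> i * mon c (A i) * exp (B i \<bullet> v)) = (\<Sum>i<R. \<kappa> i * mon c (A i) * exp (A i \<bullet> v))"
proof -
  have px: "pos_vec xb" using cb unfolding complex_balanced_def by auto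
  define u where "u = lv c - lv xb"
  have "(\<Sum>i<R. \<kappa> i * mon c (A i) * exp (B i \<bullet> v)) = (\<Sum>i<R. \<kappa> i * mon xb (A i) * exp (B i \<bullet> (u + v)))"
    using ab by (intro sum.cong) (auto simp: mon_shift[OF pc px] u_def inner_add_right exp_add)
  also have "\<dots> = (\<Sum>i<R. \<kappa> i * mon xb (A i) * exp (A i \<bullet> (u + v)))"
    by (rule cb_sum[OF cb])
  also have "\<dots> = (\<Sum>i<R. \<kappa> i * mon c (A i) * exp (A i \<bullet> v))"
    by (intro sum.cong) (auto simp: mon_shift[OF pc px] u_def inner_add_right exp_add)
  finally show ?thesis .
qed

lemma key_ineq:
  fixes A B :: "nat \<Rightarrow> real^'n" and u :: "nat \<Rightarrow> real^'n"
  assumes pc: "pos_vec c" and pw: "pos_vec w" and pu: "\<forall>i<R. pos_vec (u i)"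
    and kp: "\<forall>i<R. \<kappa> i > 0"
    and CB: "(\<Sum>i<R. \<kappa> i * mon c (A i) * exp (B i \<bullet> (lv w - lv c)))
           = (\<Sum>i<R. \<kappa> i * mon c (A i) * exp (A i \<bullet> (lv w - lv c)))"
  shows "(lv w - lv c) \<bullet> (\<Sum>i<R. \<kappa> i *\<^sub>R (mon (u i) (A i) *\<^sub>R B i - mon w (A i) *\<^sub>R A i))
         + (\<Sum>i<R. \<kappa> i * (hf c (A i) w - hf c (A i) (u i))) \<le> 0"
proof -
  define v where "v = lv w - lv c"
  define M where "M i = mon c (A i)" for i
  define P where "P i = A i \<bullet> v" for i
  define P' where "P' i = B i \<bullet> v" for i
  define S where "S i = A i \<bullet> (lv (u i) - lv c)" for i
  have Mp: "M i > 0" for i unfolding M_def using pc by (rule mon_pos)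
  have mw: "mon w (A i) = M i * exp (P i)" for i
    unfolding M_def P_def v_def by (rule mon_shift[OF pw pc])
  have mu: "mon (u i) (A i) = M i * exp (S i)" if "i < R" for i
    unfolding M_def S_def using pu that by (intro mon_shift[OF _ pc]) auto
  have "(lv w - lv c) \<bullet> (\<Sum>i<R. \<kappa> i *\<^sub>R (mon (u i) (A i) *\<^sub>R B i - mon w (A i) *\<^sub>R A i))
         + (\<Sum>i<R. \<kappa> i * (hf c (A i) w - hf c (A i) (u i)))
       = (\<Sum>i<R. \<kappa> i * M i * (exp (S i) * (P' i - S i) - exp (P i) + exp (S i)))"
    unfolding sum.distrib[symmetric] inner_sum_right
  proof (intro sum.cong refl)
    fix i assume "i \<in> {..<R}"
    hence i: "i < R" by simp
    have h1: "hf c (A i) w = M i * phi (P i)" unfolding hf_def M_def P_def v_def by simp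
    have h2: "hf c (A i) (u i) = M i * phi (S i)" unfolding hf_def M_def S_def by simp
    have "(lv w - lv c) \<bullet> (\<kappa> i *\<^sub>R (mon (u i) (A i) *\<^sub>R B i - mon w (A i) *\<^sub>R A i))
        = \<kappa> i * (mon (u i) (A i) * P' i - mon w (A i) * P i)"
      unfolding v_def[symmetric] P_def P'_def by (simp add: inner_diff_right inner_commute)
    thus "(lv w - lv c) \<bullet> (\<kappa> i *\<^sub>R (mon (u i) (A i) *\<^sub>R B i - mon w (A i) *\<^sub>R A i))
         + \<kappa> i * (hf c (A i) w - hf c (A i) (u i))
       = \<kappa> i * M i * (exp (S i) * (P' i - S i) - exp (P i) + exp (S i))"
      unfolding h1 h2 mu[OF i] mw phi_def by (simp add: algebra_simps)
  qed
  also have "\<dots> \<le> (\<Sum>i<R. \<kappa> i * M i * (exp (P' i) - exp (P i)))"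
  proof (rule sum_mono)
    fix i assume "i \<in> {..<R}"
    hence "0 \<le> \<kappa> i * M i" using kp Mp[of i] by (simp add: less_imp_le)
    moreover have "exp (S i) * (P' i - S i) - exp (P i) + exp (S i) \<le> exp (P' i) - exp (P i)"
      using exp_ge_shift[of "S i" "P' i"] by (simp add: algebra_simps)
    ultimately show "\<kappa> i * M i * (exp (S i) * (P' i - S i) - exp (P i) + exp (S i))
                     \<le> \<kappa> i * M i * (exp (P' i) - exp (P i))" by (metis mult_left_mono)
  qed
  also have "\<dots> = 0"
    using CB unfolding M_def P_def P'_def v_def by (simp add: right_diff_distrib sum_subtractf)
  finally show ?thesis .
qed

definition gj :: "real \<Rightarrow> real \<Rightarrow> real" where "gj cj u = cj * phi (ln u - ln cj)"

lemma gj_deriv: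
  assumes "cj > 0" "u > 0"
  shows "(gj cj has_real_derivative (ln u - ln cj)) (at u)"
proof -
  have "(gj cj has_real_derivative cj * ((ln u - ln cj) * exp (ln u - ln cj) * (1 / u))) (at u)"
    unfolding gj_def
    by (rule DERIV_cmult, rule DERIV_chain2[OF phi_deriv]) (use assms in \<open>auto intro!: derivative_eq_intros\<close>)
  moreover have "cj * ((ln u - ln cj) * exp (ln u - ln cj) * (1 / u)) = ln u - ln cj"
    using assms by (simp add: exp_diff)
  ultimately show ?thesis by simp
qed

lemma gj_nonneg: "cj > 0 \<Longrightarrow> gj cj u \<ge> 0"
  unfolding gj_def using phi_nonneg by simp

lemma inner_lv: "y \<bullet> (lv v - lv c) = (\<Sum>j\<in>UNIV. y $ j * (ln (v $ j) - ln (c $ j)))"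
  unfolding inner_vec_def lv_def by simp

lemma hf_cont:
  assumes "continuous_on S z" "\<forall>s\<in>S. pos_vec (z s)"
  shows "continuous_on S (\<lambda>s. hf c y (z s))"
proof -
  have nz: "\<forall>s\<in>S. z s $ j \<noteq> 0" for j using assms(2) unfolding pos_vec_def by (metis less_irrefl)
  show ?thesis unfolding hf_def inner_lv phi_def
    by (intro continuous_intros assms(1) nz)
qed

lemma hf_nonneg: "pos_vec c \<Longrightarrow> hf c y v \<ge> 0"
  unfolding hf_def using phi_nonneg mon_pos[of c y] by simp

definition Vf :: "real \<Rightarrow> nat \<Rightarrow> (nat \<Rightarrow> real^'n) \<Rightarrow> (nat \<Rightarrow> real) \<Rightarrow> (nat \<Rightarrow> real) \<Rightarrow> real^'n
   \<Rightarrow> (real \<Rightarrow> real^'n) \<Rightarrow> real \<Rightarrow> real" where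
  "Vf tau R A \<kappa> \<delta> c z t = (\<Sum>j\<in>UNIV. gj (c $ j) (z t $ j)) +
     (\<Sum>i<R. \<kappa> i * (integral {-tau..t} (\<lambda>s. hf c (A i) (z s)) - integral {-tau..t - \<delta> i} (\<lambda>s. hf c (A i) (z s))))"

lemma lyap_decrease:
  fixes A B :: "nat \<Rightarrow> real^'n" and z :: "real \<Rightarrow> real^'n"
  assumes tau: "0 \<le> tau" and pc: "pos_vec c"
    and kd: "\<forall>i<R. 0 < \<kappa> i \<and> 0 \<le> \<delta> i \<and> \<delta> i \<le> tau"
    and CB: "\<And>v. (\<Sum>i<R. \<kappa> i * mon c (A i) * exp (B i \<bullet> v)) = (\<Sum>i<R. \<kappa> i * mon c (A i) * exp (A i \<bullet> v))"
    and t1: "0 < t1"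
    and zpos: "\<forall>s\<in>{-tau..t1}. pos_vec (z s)"
    and zc: "continuous_on {-tau..t1} z"
    and zd: "\<And>t. t \<in> {0..t1} \<Longrightarrow>
       (z has_vector_derivative dmas_rhs R A B \<kappa> \<delta> (\<lambda>s. z (t + s))) (at t within {0..t1})"
  shows "Vf tau R A \<kappa> \<delta> c z t1 \<le> Vf tau R A \<kappa> \<delta> c z 0"
proof -
  define H where "H i = (\<lambda>s. hf c (A i) (z s))" for i
  have Hc: "continuous_on {-tau..t1} (H i)" for i
    unfolding H_def by (rule hf_cont[OF zc zpos])
  have Gd: "((\<lambda>x. integral {-tau..x} (H i)) has_real_derivative H i t) (at t within {-tau..t1})"
    if "t \<in> {-tau..t1}" for i t
    by (rule integral_has_real_derivative[OF Hc that])
  define D where "D t = (lv (z t) - lv c) \<bullet> dmas_rhs R A B \<kappa> \<delta> (\<lambda>s. z (t+s))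
      + (\<Sum>i<R. \<kappa> i * (H i t - H i (t - \<delta> i)))" for t
  have Veq: "Vf tau R A \<kappa> \<delta> c z = (\<lambda>t. (\<Sum>j\<in>UNIV. gj (c $ j) (z t $ j)) +
     (\<Sum>i<R. \<kappa> i * (integral {-tau..t} (H i) - integral {-tau..t - \<delta> i} (H i))))"
    unfolding Vf_def H_def by (rule ext) simp
  have VD: "(Vf tau R A \<kappa> \<delta> c z has_real_derivative D t) (at t within {0..t1})"
    if t: "t \<in> {0..t1}" for t
  proof -
    let ?F = "dmas_rhs R A B \<kappa> \<delta> (\<lambda>s. z (t+s))"
    have zj: "((\<lambda>x. z x $ j) has_real_derivative ?F $ j) (at t within {0..t1})" for j
      using bounded_linear.has_vector_derivative[OF bounded_linear_vec_nth zd[OF t]]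
      by (simp add: has_real_derivative_iff_has_vector_derivative)
    have ztp: "z t $ j > 0" "c $ j > 0" for j
      using zpos t tau pc unfolding pos_vec_def by auto
    have p1: "((\<lambda>x. \<Sum>j\<in>UNIV. gj (c $ j) (z x $ j)) has_real_derivative
               (\<Sum>j\<in>UNIV. (ln (z t $ j) - ln (c $ j)) * ?F $ j)) (at t within {0..t1})"
      by (rule DERIV_sum, rule DERIV_chain2[OF gj_deriv zj]) (use ztp in auto)
    have p2: "((\<lambda>x. integral {-tau..x} (H i)) has_real_derivative H i t) (at t within {0..t1})" for i
      by (rule DERIV_subset[OF Gd]) (use t tau in auto)
    have p3: "((\<lambda>x. integral {-tau..x - \<delta> i} (H i)) has_real_derivative H i (t - \<delta> i)) (at t within {0..t1})"
      if i: "i < R" for i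
    proof -
      have "((\<lambda>x. integral {-tau..x} (H i)) \<circ> (\<lambda>x. x - \<delta> i) has_real_derivative H i (t - \<delta> i) * 1)
              (at t within {0..t1})"
      proof (rule DERIV_image_chain)
        show "((\<lambda>x. integral {-tau..x} (H i)) has_real_derivative H i (t - \<delta> i))
                (at (t - \<delta> i) within (\<lambda>x. x - \<delta> i) ` {0..t1})"
          by (rule DERIV_subset[OF Gd]) (use t tau kd i in auto)
        show "((\<lambda>x. x - \<delta> i) has_real_derivative 1) (at t within {0..t1})"
          by (auto intro!: derivative_eq_intros)
      qed
      thus ?thesis by (simp add: o_def)
    qed
    have "((\<lambda>t. (\<Sum>j\<in>UNIV. gj (c $ j) (z t $ j)) +
     (\<Sum>i<R. \<kappa> i * (integral {-tau..t} (H i) - integral {-tau..t - \<delta> i} (H i)))) has_real_derivative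
       (\<Sum>j\<in>UNIV. (ln (z t $ j) - ln (c $ j)) * ?F $ j) + (\<Sum>i<R. \<kappa> i * (H i t - H i (t - \<delta> i))))
       (at t within {0..t1})"
      by (intro DERIV_add p1 DERIV_sum DERIV_cmult DERIV_diff p2 p3) auto
    moreover have "(\<Sum>j\<in>UNIV. (ln (z t $ j) - ln (c $ j)) * ?F $ j) = (lv (z t) - lv c) \<bullet> ?F"
      unfolding inner_vec_def lv_def by simp
    ultimately show ?thesis unfolding Veq D_def by simp
  qed
  have Vc: "continuous_on {0..t1} (Vf tau R A \<kappa> \<delta> c z)"
    by (rule DERIV_continuous_on[OF VD])
  show ?thesis
  proof (rule DERIV_nonpos_imp_decreasing_open[OF less_imp_le[OF t1] _ Vc])
    fix x assume x: "0 < x" "x < t1"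
    have "(Vf tau R A \<kappa> \<delta> c z has_real_derivative D x) (at x)"
    proof -
      have xi: "x \<in> {0..t1}" using x by simp
      have aw: "at x within {0..t1} = at x" using x by (intro at_within_interior) simp
      show ?thesis using VD[OF xi] unfolding aw .
    qed
    moreover have "D x \<le> 0"
    proof -
      have pw: "pos_vec (z x)" using zpos x tau by auto
      have pu: "\<forall>i<R. pos_vec (z (x - \<delta> i))" using zpos x tau kd by auto
      have "(lv (z x) - lv c) \<bullet> (\<Sum>i<R. \<kappa> i *\<^sub>R (mon (z (x - \<delta> i)) (A i) *\<^sub>R B i - mon (z x) (A i) *\<^sub>R A i))
         + (\<Sum>i<R. \<kappa> i * (hf c (A i) (z x) - hf c (A i) (z (x - \<delta> i)))) \<le> 0"
        by (rule key_ineq[OF pc pw pu]) (use kd CB in auto)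
      thus ?thesis unfolding D_def dmas_rhs_def H_def by simp
    qed
    ultimately show "\<exists>y. (Vf tau R A \<kappa> \<delta> c z has_real_derivative y) (at x) \<and> y \<le> 0" by blast
  qed
qed

lemma int_diff_eq:
  fixes H :: "real \<Rightarrow> real"
  assumes "continuous_on {-tau..t} H" "0 \<le> \<delta>" "\<delta> \<le> tau" "0 \<le> t"
  shows "integral {-tau..t} H - integral {-tau..t - \<delta>} H = integral {t - \<delta>..t} H"
proof -
  have "integral {-tau..t - \<delta>} H + integral {t - \<delta>..t} H = integral {-tau..t} H"
    by (rule Henstock_Kurzweil_Integration.integral_combine) (use assms in \<open>auto intro: integrable_continuous_real\<close>)
  thus ?thesis by simp
qed

lemma int_nonneg:
  fixes H :: "real \<Rightarrow> real"
  assumes "continuous_on {a..b} H" "\<forall>s\<in>{a..b}. 0 \<le> H s"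
  shows "0 \<le> integral {a..b} H"
  by (rule Henstock_Kurzweil_Integration.integral_nonneg) (use assms in \<open>auto intro: integrable_continuous_real\<close>)

lemma int_le_const:
  fixes H :: "real \<Rightarrow> real"
  assumes "continuous_on {a..b} H" "\<forall>s\<in>{a..b}. H s \<le> \<beta>" "a \<le> b"
  shows "integral {a..b} H \<le> (b - a) * \<beta>"
proof -
  have "integral {a..b} H \<le> integral {a..b} (\<lambda>_. \<beta>)"
    by (rule Henstock_Kurzweil_Integration.integral_le) (use assms in \<open>auto intro: integrable_continuous_real\<close>)
  thus ?thesis using assms by simp
qed

lemma gj_level:
  assumes c: "0 < cj" and rho: "0 < \<rho>" "\<rho> \<le> cj / 2" and u: "0 < u"
    and lt: "gj cj u < min (gj cj (cj - \<rho>)) (gj cj (cj + \<rho>))"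
  shows "\<bar>u - cj\<bar> < \<rho>"
proof (rule ccontr)
  assume "\<not> \<bar>u - cj\<bar> < \<rho>"
  hence "u \<ge> cj + \<rho> \<or> u \<le> cj - \<rho>" by auto
  thus False
  proof
    assume h: "u \<ge> cj + \<rho>"
    have "ln (cj + \<rho>) \<le> ln u" using h c rho by simp
    moreover have "0 \<le> ln (cj + \<rho>) - ln cj" using c rho by simp
    ultimately have "phi (ln (cj + \<rho>) - ln cj) \<le> phi (ln u - ln cj)"
      by (intro phi_mono_pos) auto
    hence "gj cj (cj + \<rho>) \<le> gj cj u" unfolding gj_def using c by simp
    with lt show False by simp
  next
    assume h: "u \<le> cj - \<rho>"
    have "ln u \<le> ln (cj - \<rho>)" using h c rho u by simp
    moreover have "ln (cj - \<rho>) - ln cj \<le> 0" using c rho by simp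
    ultimately have "phi (ln (cj - \<rho>) - ln cj) \<le> phi (ln u - ln cj)"
      by (intro phi_mono_neg) auto
    hence "gj cj (cj - \<rho>) \<le> gj cj u" unfolding gj_def using c by simp
    with lt show False by simp
  qed
qed

lemma gj_pos: "0 < cj \<Longrightarrow> 0 < u \<Longrightarrow> u \<noteq> cj \<Longrightarrow> 0 < gj cj u"
  unfolding gj_def by (intro mult_pos_pos phi_pos) auto

lemma gj_cont_lim:
  fixes c :: "real^'n"
  assumes "pos_vec c"
  shows "((\<lambda>w. \<Sum>j\<in>UNIV. gj (c $ j) (w $ j)) \<longlongrightarrow> 0) (nhds c)"
proof -
  have nz: "c $ j \<noteq> 0" for j using assms unfolding pos_vec_def by (metis less_irrefl)
  have "((\<lambda>w. \<Sum>j\<in>UNIV. gj (c $ j) (w $ j)) \<longlongrightarrow> (\<Sum>j\<in>UNIV. gj (c $ j) (c $ j))) (nhds c)"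
    unfolding gj_def phi_def by (intro tendsto_intros nz filterlim_ident)
  thus ?thesis by (simp add: gj_def phi_def)
qed

lemma hf_cont_lim:
  fixes c :: "real^'n"
  assumes "pos_vec c"
  shows "((\<lambda>w. hf c y w) \<longlongrightarrow> 0) (nhds c)"
proof -
  have nz: "c $ j \<noteq> 0" for j using assms unfolding pos_vec_def by (metis less_irrefl)
  have "((\<lambda>w. hf c y w) \<longlongrightarrow> hf c y c) (nhds c)"
    unfolding hf_def inner_lv phi_def by (intro tendsto_intros nz filterlim_ident)
  thus ?thesis by (simp add: hf_def phi_def)
qed

lemma ereal_lt_trans: "(x::real) \<le> t \<Longrightarrow> ereal t < T \<Longrightarrow> ereal x < T"
  by (metis ereal_less_eq(3) le_less_trans)

lemma core:
  fixes A B :: "nat \<Rightarrow> real^'n" and c :: "real^'n"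
  assumes tau: "0 \<le> tau" and pc: "pos_vec c"
    and kd: "\<forall>i<R. 0 < \<kappa> i \<and> 0 \<le> \<delta> i \<and> \<delta> i \<le> tau"
    and CB: "\<And>v. (\<Sum>i<R. \<kappa> i * mon c (A i) * exp (B i \<bullet> v)) = (\<Sum>i<R. \<kappa> i * mon c (A i) * exp (A i \<bullet> v))"
    and rho: "0 < \<rho>" "\<forall>j. \<rho> \<le> c $ j / 2"
  shows "\<exists>d>0. \<forall>z T. (\<forall>s\<in>{-tau..0}. dist (z s) c < d) \<and>
      continuous_on {t. -tau \<le> t \<and> ereal t < T} z \<and>
      (\<forall>t. 0 \<le> t \<and> ereal t < T \<and> (\<forall>s\<in>{-tau..t}. pos_vec (z s)) \<longrightarrow>
         (z has_vector_derivative dmas_rhs R A B \<kappa> \<delta> (\<lambda>s. z (t + s))) (at t within {t'. 0 \<le> t' \<and> ereal t' < T}))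
      \<longrightarrow> (\<forall>t. -tau \<le> t \<and> ereal t < T \<longrightarrow> (\<forall>j. \<bar>z t $ j - c $ j\<bar> < \<rho>))"
proof -
  have cp: "0 < c $ j" for j using pc unfolding pos_vec_def by auto
  define m where "m j = min (gj (c $ j) (c $ j - \<rho>)) (gj (c $ j) (c $ j + \<rho>))" for j
  define \<eta> where "\<eta> = Min (range m)"
  have mpos: "0 < m j" for j
    unfolding m_def using cp[of j] rho(1) spec[OF rho(2), of j] by (auto intro!: gj_pos)
  have etapos: "0 < \<eta>" unfolding \<eta>_def using mpos by (subst Min_gr_iff) auto
  have etale: "\<eta> \<le> m j" for j unfolding \<eta>_def by (rule Min_le) auto
  have level: "\<bar>u - c $ j\<bar> < \<rho>" if "0 < u" "gj (c $ j) u < \<eta>" for u j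
    by (rule gj_level[OF cp rho(1)]) (use rho that etale[of j] in \<open>auto simp: m_def\<close>)
  define K where "K = (\<Sum>i<R. \<kappa> i) * tau"
  have "0 \<le> sum \<kappa> {..<R}" by (rule sum_nonneg) (use kd in \<open>auto intro: less_imp_le\<close>)
  hence K0: "0 \<le> K" unfolding K_def using tau by simp
  define \<beta> where "\<beta> = \<eta> / (2 * (K + 1))"
  have betapos: "0 < \<beta>" unfolding \<beta>_def using etapos K0 by simp
  have Kbeta: "K * \<beta> < \<eta> / 2"
  proof -
    have "K * \<beta> = \<eta> / 2 * (K / (K + 1))" unfolding \<beta>_def using K0 by (simp add: field_simps)
    also have "\<dots> < \<eta> / 2 * 1" using K0 etapos by (intro mult_strict_left_mono) auto
    finally show ?thesis by simp
  qed
  define E where "E w = ((\<forall>j. \<bar>w $ j - c $ j\<bar> < \<rho>) \<and> (\<Sum>j\<in>UNIV. gj (c $ j) (w $ j)) < \<eta> / 2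
       \<and> (\<forall>i\<in>{..<R}. hf c (A i) w < \<beta>))" for w :: "real^'n"
  have ev: "eventually E (nhds c)"
  proof -
    have e1: "eventually (\<lambda>w. \<forall>j. \<bar>w $ j - c $ j\<bar> < \<rho>) (nhds c)"
    proof (rule eventually_all_finite)
      fix j
      have "((\<lambda>w. w $ j) \<longlongrightarrow> c $ j) (nhds c)" by (intro tendsto_intros filterlim_ident)
      from tendstoD[OF this rho(1)] show "eventually (\<lambda>w. \<bar>w $ j - c $ j\<bar> < \<rho>) (nhds c)"
        by (simp add: dist_real_def)
    qed
    have e2: "eventually (\<lambda>w. (\<Sum>j\<in>UNIV. gj (c $ j) (w $ j)) < \<eta> / 2) (nhds c)"
      using order_tendstoD(2)[OF gj_cont_lim[OF pc], of "\<eta>/2"] etapos by simp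
    have e3: "eventually (\<lambda>w. \<forall>i\<in>{..<R}. hf c (A i) w < \<beta>) (nhds c)"
      by (rule eventually_ball_finite) (use order_tendstoD(2)[OF hf_cont_lim[OF pc] betapos] in auto)
    show ?thesis unfolding E_def using eventually_conj[OF e1 eventually_conj[OF e2 e3]] by simp
  qed
  then obtain d where d: "d > 0" "\<And>w. dist w c < d \<Longrightarrow> E w"
    unfolding eventually_nhds_metric by blast
  show ?thesis
  proof (intro exI[of _ d] conjI allI impI d(1))
    fix z :: "real \<Rightarrow> real^'n" and T :: ereal and t and j0 :: 'n
    assume H: "(\<forall>s\<in>{-tau..0}. dist (z s) c < d) \<and>
      continuous_on {t. -tau \<le> t \<and> ereal t < T} z \<and>
      (\<forall>t. 0 \<le> t \<and> ereal t < T \<and> (\<forall>s\<in>{-tau..t}. pos_vec (z s)) \<longrightarrow>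
         (z has_vector_derivative dmas_rhs R A B \<kappa> \<delta> (\<lambda>s. z (t + s))) (at t within {t'. 0 \<le> t' \<and> ereal t' < T}))"
      and t2: "-tau \<le> t \<and> ereal t < T"
    have Ei: "E (z s)" if "s \<in> {-tau..0}" for s using H d that by auto
    have zc: "continuous_on {t. -tau \<le> t \<and> ereal t < T} z" using H by auto
    have zd: "\<And>t. 0 \<le> t \<Longrightarrow> ereal t < T \<Longrightarrow> (\<forall>s\<in>{-tau..t}. pos_vec (z s)) \<Longrightarrow>
         (z has_vector_derivative dmas_rhs R A B \<kappa> \<delta> (\<lambda>s. z (t + s))) (at t within {t'. 0 \<le> t' \<and> ereal t' < T})"
      using H by auto
    have main: "\<forall>j. \<bar>z t $ j - c $ j\<bar> < \<rho>"
    proof (rule ccontr)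
      assume bad: "\<not> (\<forall>j. \<bar>z t $ j - c $ j\<bar> < \<rho>)"
      have tpos: "0 < t"
      proof (rule ccontr)
        assume "\<not> 0 < t" hence "t \<in> {-tau..0}" using t2 by auto
        with Ei bad show False unfolding E_def by auto
      qed
      have sub: "{-tau..t} \<subseteq> {t. -tau \<le> t \<and> ereal t < T}"
        using t2 by (auto intro: ereal_lt_trans)
      have zct: "continuous_on {-tau..t} z" using continuous_on_subset[OF zc sub] .
      define F where "F = {s \<in> {0..t}. \<exists>j. \<rho> \<le> \<bar>z s $ j - c $ j\<bar>}"
      have Feq: "F = (\<Union>j. {s \<in> {0..t}. \<rho> \<le> \<bar>z s $ j - c $ j\<bar>})" unfolding F_def by auto
      have zct0: "continuous_on {0..t} z" by (rule continuous_on_subset[OF zct]) (use tau in auto)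
      have clj: "closed {s \<in> {0..t}. \<rho> \<le> \<bar>z s $ j - c $ j\<bar>}" for j
        by (intro continuous_on_closed_Collect_le continuous_intros zct0 closed_atLeastAtMost)
      have "closed F" unfolding Feq by (intro closed_UN ballI clj) simp
      moreover have "F \<noteq> {}" using bad tpos unfolding F_def by (auto simp: not_less)
      moreover have bddF: "bdd_below F" unfolding F_def by (auto intro: bdd_belowI[of _ 0])
      ultimately have t1F: "Inf F \<in> F" by (rule closed_contains_Inf[rotated 2] ; assumption)
      define t1 where "t1 = Inf F"
      have t1r: "0 \<le> t1" "t1 \<le> t" using t1F unfolding t1_def F_def by auto
      have t1pos: "0 < t1"
      proof (rule ccontr)
        assume "\<not> 0 < t1" hence "t1 = 0" using t1r by simp
        hence "0 \<in> F" using t1F t1_def by simp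
        then obtain j where "\<rho> \<le> \<bar>z 0 $ j - c $ j\<bar>" unfolding F_def by auto
        moreover have "\<bar>z 0 $ j - c $ j\<bar> < \<rho>" using Ei[of 0] tau unfolding E_def by auto
        ultimately show False by simp
      qed
      have before: "\<bar>z s $ j - c $ j\<bar> < \<rho>" if "s \<in> {-tau..<t1}" for s j
      proof (cases "s \<le> 0")
        case True thus ?thesis using Ei[of s] that unfolding E_def by auto
      next
        case False
        show ?thesis
        proof (rule ccontr)
          assume "\<not> ?thesis"
          hence "s \<in> F" unfolding F_def using False that t1r by (auto simp: not_less)
          hence "t1 \<le> s" unfolding t1_def by (rule cInf_lower[OF _ bddF])
          with that show False by simp
        qed
      qed
      have zct1: "continuous_on {-tau..t1} z" by (rule continuous_on_subset[OF zct]) (use t1r in auto)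
      have closeT: "\<bar>z s $ j - c $ j\<bar> \<le> \<rho>" if "s \<in> {-tau..t1}" for s j
      proof -
        have cl: "closed {s \<in> {-tau..t1}. \<bar>z s $ j - c $ j\<bar> \<le> \<rho>}"
          by (intro continuous_on_closed_Collect_le continuous_intros zct1 closed_atLeastAtMost)
        have "{-tau..<t1} \<subseteq> {s \<in> {-tau..t1}. \<bar>z s $ j - c $ j\<bar> \<le> \<rho>}"
          using before by (auto intro: less_imp_le)
        from closure_minimal[OF this cl] have "closure {-tau..<t1} \<subseteq> {s \<in> {-tau..t1}. \<bar>z s $ j - c $ j\<bar> \<le> \<rho>}" .
        moreover have "closure {-tau..<t1} = {-tau..t1}" using t1pos tau by simp
        ultimately show ?thesis using that by auto
      qed
      have zpos: "\<forall>s\<in>{-tau..t1}. pos_vec (z s)"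
      proof (intro ballI)
        fix s assume s: "s \<in> {-tau..t1}"
        show "pos_vec (z s)" unfolding pos_vec_def
        proof
          fix j have "\<bar>z s $ j - c $ j\<bar> \<le> \<rho>" by (rule closeT[OF s])
          with rho cp[of j] show "0 < z s $ j" by (smt (verit) field_sum_of_halves)
        qed
      qed
      have dec: "Vf tau R A \<kappa> \<delta> c z t1 \<le> Vf tau R A \<kappa> \<delta> c z 0"
      proof (rule lyap_decrease[OF tau pc kd CB t1pos zpos zct1])
        fix s assume s: "s \<in> {0..t1}"
        have "(z has_vector_derivative dmas_rhs R A B \<kappa> \<delta> (\<lambda>r. z (s + r))) (at s within {t'. 0 \<le> t' \<and> ereal t' < T})"
          by (rule zd) (use s t1r t2 zpos in \<open>auto intro: ereal_lt_trans\<close>)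
        thus "(z has_vector_derivative dmas_rhs R A B \<kappa> \<delta> (\<lambda>r. z (s + r))) (at s within {0..t1})"
          by (rule has_vector_derivative_within_subset) (use t1r t2 in \<open>auto intro: ereal_lt_trans\<close>)
      qed
      define Hi where "Hi i = (\<lambda>s. hf c (A i) (z s))" for i
      have Hic: "continuous_on {-tau..t1} (Hi i)" for i unfolding Hi_def by (rule hf_cont[OF zct1 zpos])
      have V0: "Vf tau R A \<kappa> \<delta> c z 0 < \<eta>"
      proof -
        have "(\<Sum>i<R. \<kappa> i * (integral {-tau..0} (Hi i) - integral {-tau..0 - \<delta> i} (Hi i)))
             \<le> (\<Sum>i<R. \<kappa> i * tau * \<beta>)"
        proof (rule sum_mono)
          fix i assume i: "i \<in> {..<R}"
          have c0: "continuous_on {-tau..0} (Hi i)" by (rule continuous_on_subset[OF Hic]) (use t1pos in auto)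
          have "integral {-tau..0} (Hi i) - integral {-tau..0 - \<delta> i} (Hi i) = integral {0 - \<delta> i..0} (Hi i)"
            by (rule int_diff_eq[OF c0]) (use kd i in auto)
          also have "\<dots> \<le> (0 - (0 - \<delta> i)) * \<beta>"
          proof (rule int_le_const)
            show "continuous_on {0 - \<delta> i..0} (Hi i)" by (rule continuous_on_subset[OF c0]) (use kd i in auto)
            show "\<forall>s\<in>{0 - \<delta> i..0}. Hi i s \<le> \<beta>"
              using Ei kd i unfolding E_def Hi_def by (force intro: less_imp_le)
          qed (use kd i in auto)
          also have "\<dots> \<le> tau * \<beta>" using kd i betapos by (auto intro: mult_right_mono)
          finally show "\<kappa> i * (integral {-tau..0} (Hi i) - integral {-tau..0 - \<delta> i} (Hi i)) \<le> \<kappa> i * tau * \<beta>"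
            using kd i by (simp add: mult.assoc less_imp_le mult_left_mono)
        qed
        also have "\<dots> = K * \<beta>" unfolding K_def by (simp add: sum_distrib_right)
        finally have a: "(\<Sum>i<R. \<kappa> i * (integral {-tau..0} (Hi i) - integral {-tau..0 - \<delta> i} (Hi i))) < \<eta> / 2"
          using Kbeta by simp
        have b: "(\<Sum>j\<in>UNIV. gj (c $ j) (z 0 $ j)) < \<eta> / 2" using Ei[of 0] tau unfolding E_def by auto
        show ?thesis using a b unfolding Vf_def Hi_def by simp
      qed
      have Vt1: "gj (c $ j) (z t1 $ j) \<le> Vf tau R A \<kappa> \<delta> c z t1" for j
      proof -
        have "gj (c $ j) (z t1 $ j) \<le> (\<Sum>j\<in>UNIV. gj (c $ j) (z t1 $ j))"
          by (rule member_le_sum) (use gj_nonneg cp in auto)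
        moreover have "0 \<le> (\<Sum>i<R. \<kappa> i * (integral {-tau..t1} (Hi i) - integral {-tau..t1 - \<delta> i} (Hi i)))"
        proof (rule sum_nonneg)
          fix i assume i: "i \<in> {..<R}"
          have "integral {-tau..t1} (Hi i) - integral {-tau..t1 - \<delta> i} (Hi i) = integral {t1 - \<delta> i..t1} (Hi i)"
            by (rule int_diff_eq[OF Hic]) (use kd i t1pos in auto)
          also have "\<dots> \<ge> 0"
          proof (rule int_nonneg)
            show "continuous_on {t1 - \<delta> i..t1} (Hi i)" by (rule continuous_on_subset[OF Hic]) (use kd i t1pos in auto)
            show "\<forall>s\<in>{t1 - \<delta> i..t1}. 0 \<le> Hi i s" unfolding Hi_def using hf_nonneg[OF pc] by auto
          qed
          finally show "0 \<le> \<kappa> i * (integral {-tau..t1} (Hi i) - integral {-tau..t1 - \<delta> i} (Hi i))"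
            using kd i by (simp add: less_imp_le)
        qed
        ultimately show ?thesis unfolding Vf_def Hi_def by simp
      qed
      have lt: "\<bar>z t1 $ j - c $ j\<bar> < \<rho>" for j
      proof (rule level)
        show "0 < z t1 $ j" using zpos t1pos tau unfolding pos_vec_def by auto
        show "gj (c $ j) (z t1 $ j) < \<eta>" using Vt1[of j] dec V0 by simp
      qed
      have "t1 \<in> F" using t1F t1_def by simp
      then obtain j where "\<rho> \<le> \<bar>z t1 $ j - c $ j\<bar>" unfolding F_def by auto
      with lt[of j] show False by simp
    qed
    thus "\<bar>z t $ j0 - c $ j0\<bar> < \<rho>" by simp
  qed
qed

definition invq :: "real^'n \<Rightarrow> real^'n \<Rightarrow> real^'n" where
  "invq q v = (\<chi> j. v $ j / q $ j)"

lemma invq_bl: "bounded_linear (invq q)"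
proof -
  have "linear (invq q)"
    by (rule linearI) (simp_all add: invq_def vec_eq_iff add_divide_distrib)
  thus ?thesis by (simp add: linear_conv_bounded_linear)
qed

lemma pos_nz: "pos_vec q \<Longrightarrow> q $ j \<noteq> 0"
  unfolding pos_vec_def by (metis less_irrefl)

lemma invq_diag: "pos_vec q \<Longrightarrow> invq q (diag_app q w) = w"
  unfolding invq_def diag_app_def by (simp add: vec_eq_iff pos_nz)

lemma diag_invq: "pos_vec q \<Longrightarrow> diag_app q (invq q w) = w"
  unfolding invq_def diag_app_def by (simp add: vec_eq_iff pos_nz)

lemma diag_zero: "pos_vec q \<Longrightarrow> diag_app q w = 0 \<Longrightarrow> w = 0"
  using invq_diag[of q w] unfolding invq_def by (simp add: vec_eq_iff)

lemma invq_pos: "pos_vec q \<Longrightarrow> pos_vec w \<Longrightarrow> pos_vec (invq q w)"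
  unfolding invq_def pos_vec_def by simp

lemma norm_invq: "pos_vec q \<Longrightarrow> norm (invq q v) \<le> norm v * (\<Sum>j\<in>UNIV. 1 / q $ j)"
proof -
  assume pq: "pos_vec q"
  have "norm (invq q v) \<le> (\<Sum>j\<in>UNIV. \<bar>invq q v $ j\<bar>)" by (rule norm_le_l1_cart)
  also have "\<dots> \<le> (\<Sum>j\<in>UNIV. norm v * (1 / q $ j))"
  proof (rule sum_mono)
    fix j
    have qj: "0 < q $ j" using pq unfolding pos_vec_def by auto
    have "\<bar>invq q v $ j\<bar> = \<bar>v $ j\<bar> / q $ j" unfolding invq_def using qj by (simp add: abs_divide)
    also have "\<dots> \<le> norm v / q $ j" by (rule divide_right_mono[OF component_le_norm_cart less_imp_le[OF qj]])
    finally show "\<bar>invq q v $ j\<bar> \<le> norm v * (1 / q $ j)" by simp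
  qed
  also have "\<dots> = norm v * (\<Sum>j\<in>UNIV. 1 / q $ j)" by (simp add: sum_distrib_left)
  finally show ?thesis .
qed

theorem mainTheorem2:
  fixes Y Y' :: "nat \<Rightarrow> real^'n" and k d :: "nat \<Rightarrow> real" and r :: nat and tau :: real
    and xs :: "real^'n"
  assumes "lcDCB tau r Y Y' k d"
    and "pos_equilibrium r Y Y' k xs"
  shows "lyapunov_stable tau r Y Y' k d xs"
proof (cases "tau < 0")
  case True
  hence e: "{-tau..0} = ({} :: real set)" by auto
  show ?thesis unfolding lyapunov_stable_def e by (auto intro: exI[of _ 1])
next
  case False
  hence tau: "0 \<le> tau" by simp
  from assms(1) obtain q r2 Y2 Y2' k2 d2 where dcb: "DCB tau r2 Y2 Y2' k2 d2"
    and lc: "lin_conj tau q r Y Y' k d r2 Y2 Y2' k2 d2"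
    unfolding lcDCB_def by blast
  from dcb obtain xb where dm2: "dmas tau r2 Y2 Y2' k2 d2" and cb: "complex_balanced r2 Y2 Y2' k2 xb"
    unfolding DCB_def by blast
  have pq: "pos_vec q" using lc unfolding lin_conj_def by simp
  have lcF: "\<And>psi. pos_hist tau psi \<Longrightarrow>
      dmas_rhs r Y Y' k d (\<lambda>s. diag_app q (psi s)) = diag_app q (dmas_rhs r2 Y2 Y2' k2 d2 psi)"
    using lc unfolding lin_conj_def by blast
  have kd: "\<forall>i<r2. 0 < k2 i \<and> 0 \<le> d2 i \<and> d2 i \<le> tau" using dm2 unfolding dmas_def by blast
  have pxs: "pos_vec xs" and eqxs: "(\<Sum>i<r. (k i * mon xs (Y i)) *\<^sub>R (Y' i - Y i)) = 0"
    using assms(2) unfolding pos_equilibrium_def by auto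
  define c where "c = invq q xs"
  have pc: "pos_vec c" unfolding c_def by (rule invq_pos[OF pq pxs])
  have xsc: "diag_app q c = xs" unfolding c_def by (rule diag_invq[OF pq])
  have "pos_hist tau (\<lambda>s. c)" unfolding pos_hist_def using pc by simp
  from lcF[OF this] have "dmas_rhs r Y Y' k d (\<lambda>s. xs) = diag_app q (dmas_rhs r2 Y2 Y2' k2 d2 (\<lambda>s. c))"
    by (simp add: xsc)
  moreover have "dmas_rhs r Y Y' k d (\<lambda>s. xs) = 0"
    using eqxs unfolding dmas_rhs_def by (simp add: scaleR_diff_right algebra_simps)
  ultimately have "diag_app q (dmas_rhs r2 Y2 Y2' k2 d2 (\<lambda>s. c)) = 0" by simp
  hence eqc: "(\<Sum>i<r2. k2 i *\<^sub>R (mon c (Y2 i) *\<^sub>R Y2' i - mon c (Y2 i) *\<^sub>R Y2 i)) = 0"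
    using diag_zero[OF pq] unfolding dmas_rhs_def by simp
  have ab: "\<forall>i<r2. Y2 i \<bullet> (lv c - lv xb) = Y2' i \<bullet> (lv c - lv xb)"
    by (rule equil_ab[OF cb pc _ eqc]) (use kd in auto)
  have CB: "(\<Sum>i<r2. k2 i * mon c (Y2 i) * exp (Y2' i \<bullet> v)) = (\<Sum>i<r2. k2 i * mon c (Y2 i) * exp (Y2 i \<bullet> v))"
    for v by (rule cbc[OF cb pc ab])
  show ?thesis unfolding lyapunov_stable_def
  proof (intro allI impI)
    fix \<epsilon> :: real assume eps: "0 < \<epsilon>"
    define Sq where "Sq = (\<Sum>j\<in>UNIV. q $ j)"
    have Sq0: "0 \<le> Sq" unfolding Sq_def using pq unfolding pos_vec_def by (auto intro: sum_nonneg less_imp_le)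
    define \<rho> where "\<rho> = min (Min (range (\<lambda>j. c $ j / 2))) (\<epsilon> / (Sq + 1))"
    have cp: "0 < c $ j" for j using pc unfolding pos_vec_def by auto
    have rho0: "0 < \<rho>" unfolding \<rho>_def using cp eps Sq0 by (auto simp: Min_gr_iff)
    have rhoc: "\<forall>j. \<rho> \<le> c $ j / 2"
    proof
      fix j
      have "Min (range (\<lambda>j. c $ j / 2)) \<le> c $ j / 2" by (rule Min_le) auto
      thus "\<rho> \<le> c $ j / 2" unfolding \<rho>_def by (rule min.coboundedI1)
    qed
    have rhoSq: "Sq * \<rho> < \<epsilon>"
    proof -
      have "Sq * \<rho> \<le> Sq * (\<epsilon> / (Sq + 1))" unfolding \<rho>_def using Sq0 by (intro mult_left_mono) auto
      also have "\<dots> = \<epsilon> * (Sq / (Sq + 1))" using Sq0 by (simp add: field_simps)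
      also have "\<dots> < \<epsilon> * 1" using Sq0 eps by (intro mult_strict_left_mono) auto
      finally show ?thesis by simp
    qed
    obtain d0 where d0: "d0 > 0" and core: "\<forall>z T. (\<forall>s\<in>{-tau..0}. dist (z s) c < d0) \<and>
      continuous_on {t. -tau \<le> t \<and> ereal t < T} z \<and>
      (\<forall>t. 0 \<le> t \<and> ereal t < T \<and> (\<forall>s\<in>{-tau..t}. pos_vec (z s)) \<longrightarrow>
         (z has_vector_derivative dmas_rhs r2 Y2 Y2' k2 d2 (\<lambda>s. z (t + s))) (at t within {t'. 0 \<le> t' \<and> ereal t' < T}))
      \<longrightarrow> (\<forall>t. -tau \<le> t \<and> ereal t < T \<longrightarrow> (\<forall>j. \<bar>z t $ j - c $ j\<bar> < \<rho>))"
      using core[OF tau pc kd CB rho0 rhoc] by blast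
    define Si where "Si = (\<Sum>j\<in>UNIV. 1 / q $ j)"
    have Si0: "0 \<le> Si" unfolding Si_def
    proof (rule sum_nonneg)
      fix j have "0 < q $ j" using pq unfolding pos_vec_def by auto
      thus "0 \<le> 1 / q $ j" by simp
    qed
    define \<delta> where "\<delta> = d0 / (Si + 1)"
    have delta0: "0 < \<delta>" unfolding \<delta>_def using d0 Si0 by simp
    have deltaSi: "\<delta> * Si < d0"
    proof -
      have "\<delta> * Si = d0 * (Si / (Si + 1))" unfolding \<delta>_def using Si0 by (simp add: field_simps)
      also have "\<dots> < d0 * 1" using Si0 d0 by (intro mult_strict_left_mono) auto
      finally show ?thesis by simp
    qed
    show "\<exists>\<delta>>0. \<forall>theta T x. pos_hist tau theta \<and> (\<forall>s\<in>{-tau..0}. norm (theta s - xs) < \<delta>) \<and>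
        dmas_solution tau r Y Y' k d theta T x \<longrightarrow>
        (\<forall>t. 0 \<le> t \<and> ereal t < T \<longrightarrow> (\<forall>s\<in>{-tau..0}. norm (x (t + s) - xs) < \<epsilon>))"
    proof (intro exI[of _ \<delta>] conjI delta0 allI impI ballI)
      fix theta T x t s
      assume H: "pos_hist tau theta \<and> (\<forall>s\<in>{-tau..0}. norm (theta s - xs) < \<delta>) \<and>
        dmas_solution tau r Y Y' k d theta T x"
        and t: "0 \<le> t \<and> ereal t < T" and s: "s \<in> {-tau..0}"
      have th: "\<forall>s\<in>{-tau..0}. norm (theta s - xs) < \<delta>" using H by blast
      have sol: "dmas_solution tau r Y Y' k d theta T x" using H by blast
      have xc: "continuous_on {t. -tau \<le> t \<and> ereal t < T} x"
        and xth: "\<forall>s\<in>{-tau..0}. x s = theta s"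
        and xd: "\<And>t. 0 \<le> t \<Longrightarrow> ereal t < T \<Longrightarrow>
            (x has_vector_derivative dmas_rhs r Y Y' k d (\<lambda>s. x (t + s)))
              (at t within {t'. 0 \<le> t' \<and> ereal t' < T})"
        using sol unfolding dmas_solution_def by auto
      define z where "z t = invq q (x t)" for t
      have xz: "x t = diag_app q (z t)" for t unfolding z_def by (simp add: diag_invq[OF pq])
      have zc: "continuous_on {t. -tau \<le> t \<and> ereal t < T} z"
        unfolding z_def using linear_continuous_on_compose[OF xc bounded_linear.linear[OF invq_bl]] .
      have "\<forall>t. -tau \<le> t \<and> ereal t < T \<longrightarrow> (\<forall>j. \<bar>z t $ j - c $ j\<bar> < \<rho>)"
      proof (rule core[THEN spec[of _ z], THEN spec[of _ T], THEN mp], intro conjI ballI allI impI zc)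
        fix s assume s: "s \<in> {-tau..0}"
        have "dist (z s) c = norm (invq q (theta s - xs))"
          unfolding z_def c_def dist_norm using xth s
          by (simp add: linear_diff[OF bounded_linear.linear[OF invq_bl]])
        also have "\<dots> \<le> norm (theta s - xs) * Si" unfolding Si_def by (rule norm_invq[OF pq])
        also have "\<dots> \<le> \<delta> * Si" using th s Si0 by (intro mult_right_mono) (auto intro: less_imp_le)
        also have "\<dots> < d0" by (rule deltaSi)
        finally show "dist (z s) c < d0" .
      next
        fix t assume tt: "0 \<le> t \<and> ereal t < T \<and> (\<forall>s\<in>{-tau..t}. pos_vec (z s))"
        have ph: "pos_hist tau (\<lambda>s. z (t + s))" unfolding pos_hist_def
        proof
          show "continuous_on {-tau..0} (\<lambda>s. z (t + s))"
          proof (rule continuous_on_compose2[OF zc])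
            show "continuous_on {-tau..0} ((+) t)" by (intro continuous_intros)
            show "(+) t ` {-tau..0} \<subseteq> {t. -tau \<le> t \<and> ereal t < T}"
              using tt by (auto intro: ereal_lt_trans)
          qed
          show "\<forall>s\<in>{-tau..0}. pos_vec (z (t + s))" using tt by auto
        qed
        have "(x has_vector_derivative dmas_rhs r Y Y' k d (\<lambda>s. x (t + s)))
              (at t within {t'. 0 \<le> t' \<and> ereal t' < T})" using xd tt by blast
        moreover have "dmas_rhs r Y Y' k d (\<lambda>s. x (t + s)) = diag_app q (dmas_rhs r2 Y2 Y2' k2 d2 (\<lambda>s. z (t + s)))"
          unfolding xz by (rule lcF[OF ph])
        ultimately have "(x has_vector_derivative diag_app q (dmas_rhs r2 Y2 Y2' k2 d2 (\<lambda>s. z (t + s))))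
              (at t within {t'. 0 \<le> t' \<and> ereal t' < T})" by simp
        from bounded_linear.has_vector_derivative[OF invq_bl[of q] this]
        show "(z has_vector_derivative dmas_rhs r2 Y2 Y2' k2 d2 (\<lambda>s. z (t + s)))
              (at t within {t'. 0 \<le> t' \<and> ereal t' < T})"
          unfolding z_def[abs_def] by (simp add: invq_diag[OF pq])
      qed
      moreover have "-tau \<le> t + s" using t s by auto
      moreover have "ereal (t + s) < T" by (rule ereal_lt_trans[of _ t]) (use t s in auto)
      ultimately have zb: "\<bar>z (t + s) $ j - c $ j\<bar> < \<rho>" for j by blast
      have "norm (x (t + s) - xs) \<le> (\<Sum>j\<in>UNIV. \<bar>(x (t + s) - xs) $ j\<bar>)" by (rule norm_le_l1_cart)
      also have "\<dots> \<le> (\<Sum>j\<in>UNIV. q $ j * \<rho>)"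
      proof (rule sum_mono)
        fix j
        have qj: "0 < q $ j" using pq unfolding pos_vec_def by auto
        have "(x (t + s) - xs) $ j = q $ j * (z (t + s) $ j - c $ j)"
          unfolding xz xsc[symmetric] by (simp add: diag_app_def algebra_simps)
        hence "\<bar>(x (t + s) - xs) $ j\<bar> = q $ j * \<bar>z (t + s) $ j - c $ j\<bar>" using qj by (simp add: abs_mult)
        also have "\<dots> \<le> q $ j * \<rho>" using zb[of j] qj by (intro mult_left_mono) auto
        finally show "\<bar>(x (t + s) - xs) $ j\<bar> \<le> q $ j * \<rho>" .
      qed
      also have "\<dots> = Sq * \<rho>" unfolding Sq_def by (simp add: sum_distrib_right)
      also have "\<dots> < \<epsilon>" by (rule rhoSq)
      finally show "norm (x (t + s) - xs) < \<epsilon>" .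
    qed
  qed
qed

end
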